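(* Let $h:(\mathbb{R}^n,0)\to(\mathbb{R}^n,0)$ be a bi-Lipschitz homeomorphism germ such that $h$ (and hence $h^{-1}$) satisfies condition semiline-(SSP). Let $\overline{h}:S^{n-1}\to S^{n-1}$ be the induced map $\overline{h}(a)=\lim_{t\to0^+}h(ta)/\|h(ta)\|$. Then $\overline{h}$ extends to a bi-Lipschitz homeomorphism $\overline{h}:\mathbb{R}^n\to\mathbb{R}^n$, and for every set-germ $A\subset\mathbb{R}^n$ at $0$ with $0\in\overline{A}$ we have $\overline{h}(D(A))=D(h(LD(A)))=D(h(A))$. In particular $\dim D(A)=\dim D(h(A))$.
   Context: For a set-germ $A\subset\mathbb{R}^n$ at $0$ with $0\in\overline A$, the direction set is $D(A)=\{a\in S^{n-1}:\exists\, x_i\in A\setminus\{0\},\ x_i\to0,\ x_i/\|x_i\|\to a\}$, and $LD(A)=\{ta: a\in D(A),\ t\ge0\}$ is its real tangent cone. A semiline is a set $\{ta:t\ge0\}$ with $a\in S^{n-1}$. A homeomorphism germ $h$ satisfies condition semiline-(SSP) if for every semiline $\ell$, $D(h(\ell))$ is a single point; under this hypothesis the limit defining $\overline h(a)$ exists and equals the unique element of $D(h(\{ta:t\ge0\}))$. A bi-Lipschitz homeomorphism germ is a homeomorphism germ $h$ with $h(0)=0$ and constants $0<K_1\le K_2$ with $K_1\|x-y\|\le\|h(x)-h(y)\|\le K_2\|x-y\|$ near $0$. *)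

theory Defs
  imports "HOL-Analysis.Analysis"
begin

definition dirset :: "(real ^ 'n) set \<Rightarrow> (real ^ 'n) set" where
  "dirset A = {a. norm a = 1 \<and> (\<exists>x :: nat \<Rightarrow> real ^ 'n.
      (\<forall>i. x i \<in> A - {0}) \<and> x \<longlonglongrightarrow> 0 \<and> (\<lambda>i. x i /\<^sub>R norm (x i)) \<longlonglongrightarrow> a)}"

definition LD :: "(real ^ 'n) set \<Rightarrow> (real ^ 'n) set" where
  "LD A = {t *\<^sub>R a | t a. a \<in> dirset A \<and> t \<ge> 0}"

definition semiline :: "real ^ 'n \<Rightarrow> (real ^ 'n) set" where
  "semiline a = {t *\<^sub>R a | t. t \<ge> 0}"

definition bilipschitz_on :: "(real ^ 'n) set \<Rightarrow> real \<Rightarrow> real \<Rightarrow> (real ^ 'n \<Rightarrow> real ^ 'n) \<Rightarrow> bool" where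
  "bilipschitz_on S K1 K2 h \<longleftrightarrow> 0 < K1 \<and> K1 \<le> K2 \<and>
     (\<forall>x\<in>S. \<forall>y\<in>S. K1 * norm (x - y) \<le> norm (h x - h y) \<and> norm (h x - h y) \<le> K2 * norm (x - y))"

definition semiline_SSP :: "(real ^ 'n) set \<Rightarrow> (real ^ 'n \<Rightarrow> real ^ 'n) \<Rightarrow> bool" where
  "semiline_SSP U h \<longleftrightarrow>
     (\<forall>a. norm a = 1 \<longrightarrow> (\<exists>b. dirset (h ` (semiline a \<inter> U)) = {b}))"

definition hbar :: "(real ^ 'n \<Rightarrow> real ^ 'n) \<Rightarrow> real ^ 'n \<Rightarrow> real ^ 'n" where
  "hbar h a = Lim (at_right 0) (\<lambda>t. h (t *\<^sub>R a) /\<^sub>R norm (h (t *\<^sub>R a)))"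

end

theory Submission
  imports Defs "HOL-Analysis.Analysis"
begin


lemma norm_normalize_diff:
  fixes u v :: "'a::real_normed_vector"
  assumes "v \<noteq> 0"
  shows "norm (u /\<^sub>R norm u - v /\<^sub>R norm v) \<le> 2 * norm (u - v) / norm v"
proof (cases "u = 0")
  case True
  then show ?thesis using assms by simp
next
  case False
  have eq: "u /\<^sub>R norm u - v /\<^sub>R norm v = (u - v) /\<^sub>R norm v + (1/norm u - 1/norm v) *\<^sub>R u"
    using False assms by (simp add: algebra_simps divide_inverse)
  have "norm ((1/norm u - 1/norm v) *\<^sub>R u) = \<bar>norm v - norm u\<bar> / norm v"
    using False assms by (simp add: field_simps abs_mult)
  also have "\<dots> \<le> norm (u - v) / norm v"
    using assms by (intro divide_right_mono) (auto simp: norm_triangle_ineq3 abs_minus_commute)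
  finally have "norm ((1/norm u - 1/norm v) *\<^sub>R u) \<le> norm (u - v) / norm v" .
  moreover have "norm ((u - v) /\<^sub>R norm v) = norm (u - v) / norm v" using assms by (simp add: divide_simps)
  ultimately show ?thesis unfolding eq
    using norm_triangle_ineq[of "(u - v) /\<^sub>R norm v" "(1/norm u - 1/norm v) *\<^sub>R u"] by linarith
qed

lemma geo1:
  fixes a b :: "'a::real_normed_vector"
  assumes "norm a = 1" "norm b = 1" "r \<ge> 0" "s \<ge> 0"
  shows "\<bar>r - s\<bar> \<le> norm (r *\<^sub>R a - s *\<^sub>R b)"
  using norm_triangle_ineq3[of "r *\<^sub>R a" "s *\<^sub>R b"] assms by simp

lemma geo2:
  fixes a b :: "'a::real_normed_vector"
  assumes "norm a = 1" "norm b = 1" "r \<ge> 0" "s \<ge> 0"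
  shows "norm (r *\<^sub>R a - s *\<^sub>R b) \<le> \<bar>r - s\<bar> + min r s * norm (a - b)"
proof -
  have 1: "norm (r *\<^sub>R a - s *\<^sub>R b) \<le> norm (r *\<^sub>R a - s *\<^sub>R a) + norm (s *\<^sub>R a - s *\<^sub>R b)"
    using norm_triangle_ineq[of "r *\<^sub>R a - s *\<^sub>R a" "s *\<^sub>R a - s *\<^sub>R b"] by simp
  have 2: "norm (r *\<^sub>R a - s *\<^sub>R b) \<le> norm (r *\<^sub>R a - r *\<^sub>R b) + norm (r *\<^sub>R b - s *\<^sub>R b)"
    using norm_triangle_ineq[of "r *\<^sub>R a - r *\<^sub>R b" "r *\<^sub>R b - s *\<^sub>R b"] by simp
  have e1: "norm (r *\<^sub>R a - s *\<^sub>R a) = \<bar>r - s\<bar>" using assms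
    by (metis mult.right_neutral norm_scaleR scaleR_left_diff_distrib)
  have e2: "norm (r *\<^sub>R b - s *\<^sub>R b) = \<bar>r - s\<bar>" using assms
    by (metis mult.right_neutral norm_scaleR scaleR_left_diff_distrib)
  have e3: "norm (s *\<^sub>R a - s *\<^sub>R b) = s * norm (a - b)" using assms
    by (metis abs_of_nonneg norm_scaleR scaleR_right_diff_distrib)
  have e4: "norm (r *\<^sub>R a - r *\<^sub>R b) = r * norm (a - b)" using assms
    by (metis abs_of_nonneg norm_scaleR scaleR_right_diff_distrib)
  show ?thesis using 1 2 e1 e2 e3 e4 by (cases "r \<le> s") (auto simp: min_def)
qed

lemma geo3:
  fixes a b :: "'a::real_normed_vector"
  assumes "norm a = 1" "norm b = 1" "r \<ge> 0" "s \<ge> 0"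
  shows "min r s * norm (a - b) \<le> 2 * norm (r *\<^sub>R a - s *\<^sub>R b)"
proof -
  have e3: "norm (s *\<^sub>R a - s *\<^sub>R b) = s * norm (a - b)" using assms
    by (metis abs_of_nonneg norm_scaleR scaleR_right_diff_distrib)
  have e4: "norm (r *\<^sub>R a - r *\<^sub>R b) = r * norm (a - b)" using assms
    by (metis abs_of_nonneg norm_scaleR scaleR_right_diff_distrib)
  have 1: "norm (s *\<^sub>R a - s *\<^sub>R b) \<le> norm (s *\<^sub>R a - r *\<^sub>R a) + norm (r *\<^sub>R a - s *\<^sub>R b)"
    using norm_triangle_ineq[of "s *\<^sub>R a - r *\<^sub>R a" "r *\<^sub>R a - s *\<^sub>R b"] by simp
  have 2: "norm (r *\<^sub>R a - r *\<^sub>R b) \<le> norm (r *\<^sub>R a - s *\<^sub>R b) + norm (s *\<^sub>R b - r *\<^sub>R b)"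
    using norm_triangle_ineq[of "r *\<^sub>R a - s *\<^sub>R b" "s *\<^sub>R b - r *\<^sub>R b"] by simp
  have e1: "norm (s *\<^sub>R a - r *\<^sub>R a) = \<bar>r - s\<bar>" using assms
    by (metis mult.right_neutral norm_scaleR scaleR_left_diff_distrib abs_minus_commute)
  have e2: "norm (s *\<^sub>R b - r *\<^sub>R b) = \<bar>r - s\<bar>" using assms
    by (metis mult.right_neutral norm_scaleR scaleR_left_diff_distrib abs_minus_commute)
  have g: "\<bar>r - s\<bar> \<le> norm (r *\<^sub>R a - s *\<^sub>R b)" using geo1 assms by blast
  show ?thesis using 1 2 e1 e2 e3 e4 g by (simp add: min_def)
qed

lemma geo_ray:
  fixes a b :: "'a::real_inner"
  assumes "norm a = 1" "norm b = 1" "s \<ge> 0" "t \<ge> 0"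
  shows "t * norm (a - b) \<le> 2 * norm (s *\<^sub>R a - t *\<^sub>R b)"
proof -
  define c where "c = a \<bullet> b"
  have aa: "a \<bullet> a = 1" "b \<bullet> b = 1" using assms by (simp_all add: dot_square_norm)
  have c1: "c \<le> 1" "- 1 \<le> c" using Cauchy_Schwarz_ineq2[of a b] assms unfolding c_def by auto
  have nab: "(norm (a - b))^2 = 2 - 2 * c"
    using assms unfolding c_def by (simp add: power2_norm_eq_inner algebra_simps inner_commute aa)
  have nst: "(norm (s *\<^sub>R a - t *\<^sub>R b))^2 = s^2 - 2 * s * t * c + t^2"
    using assms unfolding c_def power2_norm_eq_inner by (simp add: algebra_simps inner_commute power2_eq_square aa)
  have key: "(t * norm (a - b))^2 \<le> (2 * norm (s *\<^sub>R a - t *\<^sub>R b))^2"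
  proof -
    have "(t * norm (a - b))^2 = t^2 * (2 - 2*c)" by (simp add: power_mult_distrib nab)
    moreover have "(2 * norm (s *\<^sub>R a - t *\<^sub>R b))^2 = 4 * (s^2 - 2 * s * t * c + t^2)"
      by (simp add: power_mult_distrib nst)
    moreover have "t^2 * (2 - 2*c) \<le> 4 * (s^2 - 2 * s * t * c + t^2)"
    proof (cases "c \<le> 0")
      case True
      then have "s*t*c \<le> 0" using assms by (simp add: mult_nonneg_nonpos)
      moreover have "t^2 * (2 - 2*c) \<le> t^2 * 4" using c1 by (intro mult_left_mono) auto
      moreover have "0 \<le> s^2" by simp
      moreover have "4 * (s^2 - 2 * s * t * c + t^2) = 4 * s^2 - 8 * (s * t * c) + 4 * t^2" by (simp add: algebra_simps)
      ultimately show ?thesis by linarith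
    next
      case False
      have "s^2 - 2 * s * t * c + t^2 = (s - t*c)^2 + t^2*(1 - c^2)" by (simp add: power2_eq_square algebra_simps)
      moreover have "t^2*(1-c^2) \<ge> t^2 * ((1-c)/2)"
      proof -
        have "(1-c)*(1+c) \<ge> (1-c)*(1/2)" using c1 False by (intro mult_left_mono) auto
        then have "1 - c^2 \<ge> (1-c)/2" by (simp add: power2_eq_square algebra_simps)
        then show ?thesis by (intro mult_left_mono) auto
      qed
      moreover have "0 \<le> (s - t*c)^2" by simp
      ultimately have X: "t^2 * ((1-c)/2) \<le> s^2 - 2 * s * t * c + t^2" by linarith
      have "t^2 * (2 - 2*c) = 4 * (t^2 * ((1-c)/2))" by (simp add: algebra_simps)
      also have "\<dots> \<le> 4 * (s^2 - 2 * s * t * c + t^2)" by (rule mult_left_mono[OF X]) simp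
      finally show ?thesis .
    qed
    ultimately show ?thesis by simp
  qed
  show ?thesis by (rule power2_le_imp_le[OF key]) simp
qed



lemma arith1:
  fixes p q t nv K1 K2 w :: real
  assumes "0 \<le> p" "p \<le> K2 * q" "K1 * t \<le> nv" "0 < K1" "0 < t" "q = t * w" "0 \<le> w"
  shows "2 * p / nv \<le> 2 * K2 / K1 * w"
proof -
  have "0 < K1 * t" using assms by simp
  then have nv: "0 < nv" using assms by linarith
  have "2 * p / nv \<le> 2 * (K2 * q) / nv" using assms nv by (intro divide_right_mono) auto
  also have "\<dots> \<le> 2 * (K2 * q) / (K1 * t)"
  proof (rule divide_left_mono)
    show "0 \<le> 2 * (K2 * q)" using assms by linarith
  qed (use assms nv in auto)
  also have "\<dots> = 2 * K2 / K1 * w" using assms by (simp add: field_simps)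
  finally show ?thesis .
qed

locale blh =
  fixes h :: "real ^ 'n \<Rightarrow> real ^ 'n" and U :: "(real ^ 'n) set" and K1 K2 :: real
  assumes opU: "open U" and U0: "0 \<in> U" and h0: "h 0 = 0"
    and bl: "bilipschitz_on U K1 K2 h" and ssp: "semiline_SSP U h"
begin

lemma K: "0 < K1" "K1 \<le> K2" "0 < K2"
  using bl unfolding bilipschitz_on_def by auto

lemma lip: "x \<in> U \<Longrightarrow> y \<in> U \<Longrightarrow> K1 * norm (x - y) \<le> norm (h x - h y)"
  "x \<in> U \<Longrightarrow> y \<in> U \<Longrightarrow> norm (h x - h y) \<le> K2 * norm (x - y)"
  using bl unfolding bilipschitz_on_def by auto

lemma nrm: "x \<in> U \<Longrightarrow> K1 * norm x \<le> norm (h x)" "x \<in> U \<Longrightarrow> norm (h x) \<le> K2 * norm x"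
  using lip[of x 0] U0 h0 by auto

lemma nz: "x \<in> U \<Longrightarrow> x \<noteq> 0 \<Longrightarrow> h x \<noteq> 0"
  using nrm(1)[of x] K by (auto simp: mult_le_0_iff)

lemma contU: "continuous_on U h"
proof -
  have "continuous_on U h"
    unfolding continuous_on_iff
  proof (intro ballI allI impI)
    fix x e assume x: "x \<in> U" and e: "(0::real) < e"
    show "\<exists>d>0. \<forall>x'\<in>U. dist x' x < d \<longrightarrow> dist (h x') (h x) < e"
    proof (intro exI[of _ "e / K2"] conjI ballI impI)
      show "0 < e / K2" using e K by simp
      fix y assume y: "y \<in> U" "dist y x < e / K2"
      have "dist (h y) (h x) \<le> K2 * dist y x" using lip(2)[OF y(1) x] by (simp add: dist_norm)
      also have "\<dots> < K2 * (e / K2)" using y(2) K by (intro mult_strict_left_mono) auto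
      also have "\<dots> = e" using K by simp
      finally show "dist (h y) (h x) < e" .
    qed
  qed
  then show ?thesis .
qed

lemma ballU: obtains \<delta> where "\<delta> > 0" "ball 0 \<delta> \<subseteq> U"
  using opU U0 open_contains_ball by blast

definition fa :: "real ^ 'n \<Rightarrow> real \<Rightarrow> real ^ 'n" where
  "fa a t = h (t *\<^sub>R a) /\<^sub>R norm (h (t *\<^sub>R a))"

lemma ray_tendsto:
  assumes a: "norm a = 1"
  shows "(fa a \<longlongrightarrow> hbar h a) (at_right 0)" "norm (hbar h a) = 1"
proof -
  obtain \<delta> where d: "\<delta> > 0" "ball 0 \<delta> \<subseteq> U" using ballU by blast
  obtain b where b: "dirset (h ` (semiline a \<inter> U)) = {b}" using ssp a unfolding semiline_SSP_def by blast
  have tb: "(fa a \<longlongrightarrow> b) (at_right 0)"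
  proof (rule ccontr)
    assume "\<not> (fa a \<longlongrightarrow> b) (at_right 0)"
    then obtain \<epsilon> where e: "\<epsilon> > 0" "\<not> eventually (\<lambda>t. dist (fa a t) b < \<epsilon>) (at_right 0)"
      unfolding tendsto_iff by blast
    have "\<forall>n::nat. \<exists>t. 0 < t \<and> t < min \<delta> (1 / (real n + 1)) \<and> \<not> dist (fa a t) b < \<epsilon>"
    proof
      fix n :: nat
      have "min \<delta> (1 / (real n + 1)) > 0" using d by simp
      then show "\<exists>t. 0 < t \<and> t < min \<delta> (1 / (real n + 1)) \<and> \<not> dist (fa a t) b < \<epsilon>"
        using e(2) unfolding eventually_at_right_field by blast
    qed
    then obtain T where T: "\<And>n. 0 < T n" "\<And>n. T n < min \<delta> (1 / (real n + 1))"
      "\<And>n. \<not> dist (fa a (T n)) b < \<epsilon>" by metis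
    have TU: "T n *\<^sub>R a \<in> U" for n
      using T(1)[of n] T(2)[of n] d a by (auto simp: subset_iff)
    have hnz: "h (T n *\<^sub>R a) \<noteq> 0" for n
      using nz[OF TU[of n]] T(1)[of n] a by (metis norm_zero scaleR_eq_0_iff less_irrefl zero_neq_one)
    have sph: "fa a (T n) \<in> sphere 0 1" for n
      using hnz[of n] by (simp add: fa_def)
    obtain c r where c: "c \<in> sphere 0 1" "strict_mono r" "((\<lambda>n. fa a (T n)) \<circ> r) \<longlonglongrightarrow> c"
      using seq_compactE[OF compact_imp_seq_compact[OF compact_sphere[of "0::real^'n" 1]], of "\<lambda>n. fa a (T n)"] sph
      by blast
    have T0: "T \<longlonglongrightarrow> 0"
    proof (rule Lim_null_comparison[of _ "\<lambda>n. 1 / (real n + 1)"])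
      show "\<forall>\<^sub>F n in sequentially. norm (T n) \<le> 1 / (real n + 1)"
        using T(1,2) by (auto intro!: always_eventually less_imp_le simp: abs_of_pos)
      show "(\<lambda>n. 1 / (real n + 1)) \<longlonglongrightarrow> 0" using LIMSEQ_inverse_real_of_nat by (simp add: inverse_eq_divide add.commute)
    qed
    have Tr0: "(\<lambda>n. T (r n)) \<longlonglongrightarrow> 0" using LIMSEQ_subseq_LIMSEQ[OF T0 c(2)] by (simp add: o_def)
    have "c \<in> dirset (h ` (semiline a \<inter> U))"
      unfolding dirset_def
    proof (intro CollectI conjI exI[of _ "\<lambda>n. h (T (r n) *\<^sub>R a)"])
      show "norm c = 1" using c(1) by simp
      show "\<forall>i. h (T (r i) *\<^sub>R a) \<in> h ` (semiline a \<inter> U) - {0}"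
        using TU hnz T(1) unfolding semiline_def by (auto intro!: imageI less_imp_le)
      show "(\<lambda>i. h (T (r i) *\<^sub>R a)) \<longlonglongrightarrow> 0"
      proof (rule Lim_null_comparison[of _ "\<lambda>n. K2 * T (r n)"])
        show "\<forall>\<^sub>F n in sequentially. norm (h (T (r n) *\<^sub>R a)) \<le> K2 * T (r n)"
          using nrm(2)[OF TU] T(1) a by (auto intro!: always_eventually simp: less_imp_le)
        show "(\<lambda>n. K2 * T (r n)) \<longlonglongrightarrow> 0" using tendsto_mult_right_zero[OF Tr0] by simp
      qed
      show "(\<lambda>i. h (T (r i) *\<^sub>R a) /\<^sub>R norm (h (T (r i) *\<^sub>R a))) \<longlonglongrightarrow> c"
        using c(3) by (simp add: o_def fa_def)
    qed
    then have "c = b" using b by simp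
    moreover have "\<epsilon> \<le> dist c b"
    proof (rule tendsto_lowerbound)
      show "((\<lambda>n. dist (fa a (T (r n))) b) \<longlonglongrightarrow> dist c b)"
        using tendsto_dist[OF c(3) tendsto_const[of b]] by (simp add: o_def)
      show "\<forall>\<^sub>F n in sequentially. \<epsilon> \<le> dist (fa a (T (r n))) b"
        using T(3) by (auto intro!: always_eventually simp: not_less)
    qed simp
    ultimately show False using e(1) by simp
  qed
  have "hbar h a = b"
    unfolding hbar_def using tendsto_Lim[OF _ tb[unfolded fa_def]] by simp
  then show "(fa a \<longlongrightarrow> hbar h a) (at_right 0)" using tb by simp
  have "b \<in> dirset (h ` (semiline a \<inter> U))" using b by simp
  then show "norm (hbar h a) = 1" using \<open>hbar h a = b\<close> unfolding dirset_def by simp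
qed


lemma seq_dir:
  fixes x :: "nat \<Rightarrow> real ^ 'n"
  assumes x: "\<forall>i. x i \<in> U - {0}" "x \<longlonglongrightarrow> 0" "(\<lambda>i. x i /\<^sub>R norm (x i)) \<longlonglongrightarrow> a"
  shows "(\<lambda>i. h (x i) /\<^sub>R norm (h (x i))) \<longlonglongrightarrow> hbar h a" "norm a = 1"
proof -
  have "(\<lambda>i. norm (x i /\<^sub>R norm (x i))) \<longlonglongrightarrow> norm a" by (rule tendsto_norm[OF x(3)])
  moreover have "(\<lambda>i. norm (x i /\<^sub>R norm (x i))) = (\<lambda>i. 1)" using x(1) by auto
  ultimately have "(\<lambda>i. 1::real) \<longlonglongrightarrow> norm a" by simp
  then show na: "norm a = 1" using LIMSEQ_unique[OF _ tendsto_const[of "1::real"]] by metis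
  obtain \<delta> where d: "\<delta> > 0" "ball 0 \<delta> \<subseteq> U" using ballU by blast
  define t where "t i = norm (x i)" for i
  have tpos: "t i > 0" for i using x(1) by (auto simp: t_def)
  have t0: "t \<longlonglongrightarrow> 0" unfolding t_def using tendsto_norm_zero[OF x(2)] .
  have tlim: "filterlim t (at_right 0) sequentially"
    unfolding filterlim_at using tpos t0 by (auto intro!: always_eventually simp: less_imp_neq[symmetric])
  have g: "(\<lambda>i. fa a (t i)) \<longlonglongrightarrow> hbar h a"
    by (rule filterlim_compose[OF ray_tendsto(1)[OF na] tlim])
  have w0: "(\<lambda>i. norm (x i /\<^sub>R norm (x i) - a)) \<longlonglongrightarrow> 0"
  proof -
    have "(\<lambda>i. x i /\<^sub>R norm (x i) - a) \<longlonglongrightarrow> 0"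
      using tendsto_diff[OF x(3) tendsto_const[of a]] by simp
    then show ?thesis by (rule tendsto_norm_zero)
  qed
  have diff: "(\<lambda>i. h (x i) /\<^sub>R norm (h (x i)) - fa a (t i)) \<longlonglongrightarrow> 0"
  proof (rule Lim_null_comparison[of _ "\<lambda>i. 2 * K2 / K1 * norm (x i /\<^sub>R norm (x i) - a)"])
    show "(\<lambda>i. 2 * K2 / K1 * norm (x i /\<^sub>R norm (x i) - a)) \<longlonglongrightarrow> 0"
      by (rule tendsto_mult_right_zero[OF w0])
    have ev: "\<forall>\<^sub>F i in sequentially. t i < \<delta>" using order_tendstoD(2)[OF t0 d(1)] .
    show "\<forall>\<^sub>F i in sequentially. norm (h (x i) /\<^sub>R norm (h (x i)) - fa a (t i))
            \<le> 2 * K2 / K1 * norm (x i /\<^sub>R norm (x i) - a)"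
    proof (rule eventually_mono[OF ev])
      fix i assume ti: "t i < \<delta>"
      have taU: "t i *\<^sub>R a \<in> U" using ti tpos[of i] d na by (auto simp: subset_iff)
      have xU: "x i \<in> U" "x i \<noteq> 0" using x(1) by auto
      have vnz: "h (t i *\<^sub>R a) \<noteq> 0" using nz[OF taU] tpos[of i] na by (metis norm_zero scaleR_eq_0_iff less_irrefl zero_neq_one)
      have "norm (h (x i) /\<^sub>R norm (h (x i)) - fa a (t i))
          \<le> 2 * norm (h (x i) - h (t i *\<^sub>R a)) / norm (h (t i *\<^sub>R a))"
        unfolding fa_def by (rule norm_normalize_diff[OF vnz])
      also have "\<dots> \<le> 2 * K2 / K1 * norm (x i /\<^sub>R norm (x i) - a)"
      proof (rule arith1)
        show "norm (h (x i) - h (t i *\<^sub>R a)) \<le> K2 * norm (x i - t i *\<^sub>R a)" by (rule lip(2)[OF xU(1) taU])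
        show "K1 * t i \<le> norm (h (t i *\<^sub>R a))" using nrm(1)[OF taU] na tpos[of i] by simp
        have "x i - t i *\<^sub>R a = t i *\<^sub>R (x i /\<^sub>R norm (x i) - a)" using tpos[of i] by (simp add: t_def algebra_simps)
        then show "norm (x i - t i *\<^sub>R a) = t i * norm (x i /\<^sub>R norm (x i) - a)" using tpos[of i] by simp
      qed (use K tpos in auto)
      finally show "norm (h (x i) /\<^sub>R norm (h (x i)) - fa a (t i)) \<le> 2 * K2 / K1 * norm (x i /\<^sub>R norm (x i) - a)" .
    qed
  qed
  show "(\<lambda>i. h (x i) /\<^sub>R norm (h (x i))) \<longlonglongrightarrow> hbar h a"
    using tendsto_add[OF diff g] by simp
qed

end


lemma dirset_eps:
  "dirset A = {a. norm a = 1 \<and> (\<forall>e>0. \<exists>x\<in>A-{0}. norm x < e \<and> norm (x /\<^sub>R norm x - a) < e)}"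
proof (intro set_eqI iffI)
  fix a assume "a \<in> dirset A"
  then obtain x where a: "norm a = 1" "\<forall>i. x i \<in> A - {0}" "x \<longlonglongrightarrow> 0" "(\<lambda>i. x i /\<^sub>R norm (x i)) \<longlonglongrightarrow> a"
    unfolding dirset_def by blast
  show "a \<in> {a. norm a = 1 \<and> (\<forall>e>0. \<exists>x\<in>A-{0}. norm x < e \<and> norm (x /\<^sub>R norm x - a) < e)}"
  proof (intro CollectI conjI allI impI)
    fix e :: real assume e: "e > 0"
    have "\<forall>\<^sub>F i in sequentially. norm (x i) < e"
      using order_tendstoD(2)[OF tendsto_norm_zero[OF a(3)] e] .
    moreover have "\<forall>\<^sub>F i in sequentially. norm (x i /\<^sub>R norm (x i) - a) < e"
      using a(4) e unfolding tendsto_iff dist_norm by blast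
    ultimately have "\<forall>\<^sub>F i in sequentially. norm (x i) < e \<and> norm (x i /\<^sub>R norm (x i) - a) < e"
      by (rule eventually_conj)
    then obtain N where N: "\<forall>i\<ge>N. norm (x i) < e \<and> norm (x i /\<^sub>R norm (x i) - a) < e"
      unfolding eventually_sequentially by blast
    then have "norm (x N) < e" "norm (x N /\<^sub>R norm (x N) - a) < e" by auto
    then show "\<exists>x\<in>A-{0}. norm x < e \<and> norm (x /\<^sub>R norm x - a) < e" using a(2) by blast
  qed (use a in simp)
next
  fix a assume "a \<in> {a. norm a = 1 \<and> (\<forall>e>0. \<exists>x\<in>A-{0}. norm x < e \<and> norm (x /\<^sub>R norm x - a) < e)}"
  then have a: "norm a = 1" "\<And>e. e > 0 \<Longrightarrow> \<exists>x\<in>A-{0}. norm x < e \<and> norm (x /\<^sub>R norm x - a) < e" by auto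
  have "\<forall>i::nat. \<exists>x. x \<in> A-{0} \<and> norm x < 1 / (real i + 1) \<and> norm (x /\<^sub>R norm x - a) < 1 / (real i + 1)"
  proof
    fix i :: nat
    have "1 / (real i + 1) > 0" by simp
    from a(2)[OF this] show "\<exists>x. x \<in> A-{0} \<and> norm x < 1 / (real i + 1) \<and> norm (x /\<^sub>R norm x - a) < 1 / (real i + 1)"
      by blast
  qed
  from choice[OF this] obtain x where x0: "\<forall>i. x i \<in> A-{0} \<and> norm (x i) < 1 / (real i + 1) \<and> norm (x i /\<^sub>R norm (x i) - a) < 1 / (real i + 1)"
    by blast
  then have x: "\<And>i. x i \<in> A - {0}" "\<And>i. norm (x i) < 1 / (real i + 1)"
    "\<And>i. norm (x i /\<^sub>R norm (x i) - a) < 1 / (real i + 1)" by auto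
  have inv: "(\<lambda>n. 1 / (real n + 1)) \<longlonglongrightarrow> 0" using LIMSEQ_inverse_real_of_nat by (simp add: inverse_eq_divide add.commute)
  have "x \<longlonglongrightarrow> 0"
    by (rule Lim_null_comparison[OF _ inv]) (rule always_eventually, rule allI, rule less_imp_le, rule x(2))
  moreover have d0: "(\<lambda>i. x i /\<^sub>R norm (x i) - a) \<longlonglongrightarrow> 0"
    by (rule Lim_null_comparison[OF _ inv]) (rule always_eventually, rule allI, rule less_imp_le, simp add: x(3))
  have "(\<lambda>i. x i /\<^sub>R norm (x i)) \<longlonglongrightarrow> a"
    using tendsto_add[OF d0 tendsto_const[of a]] by simp
  ultimately show "a \<in> dirset A" unfolding dirset_def using a(1) x(1) by blast
qed

lemma dirset_LD: "dirset (LD A) = dirset A"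
proof (intro set_eqI iffI)
  fix a assume "a \<in> dirset (LD A)"
  then have a: "norm a = 1" "\<And>e. e > 0 \<Longrightarrow> \<exists>x\<in>LD A-{0}. norm x < e \<and> norm (x /\<^sub>R norm x - a) < e"
    unfolding dirset_eps by auto
  show "a \<in> dirset A" unfolding dirset_eps
  proof (intro CollectI conjI allI impI)
    fix e :: real assume e: "e > 0"
    have e2: "e / 2 > 0" using e by simp
    obtain x where x: "x \<in> LD A - {0}" "norm x < e / 2" "norm (x /\<^sub>R norm x - a) < e / 2"
      using a(2)[OF e2] by blast
    then obtain t c where tc: "x = t *\<^sub>R c" "c \<in> dirset A" "t \<ge> 0" unfolding LD_def by blast
    have c1: "norm c = 1" using tc(2) unfolding dirset_def by blast
    have "t \<noteq> 0" using x(1) tc by auto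
    then have tp: "t > 0" using tc(3) by simp
    have "x /\<^sub>R norm x = c" using tc(1) tp c1 by simp
    then have xc: "norm (c - a) < e / 2" using x(3) by simp
    obtain z where z: "z \<in> A - {0}" "norm z < e" "norm (z /\<^sub>R norm z - c) < e / 2"
      using tc(2) e2 e unfolding dirset_eps by fastforce
    have "norm (z /\<^sub>R norm z - a) \<le> norm (z /\<^sub>R norm z - c) + norm (c - a)"
      using norm_triangle_ineq[of "z /\<^sub>R norm z - c" "c - a"] by simp
    then have "norm (z /\<^sub>R norm z - a) < e" using z(3) xc by linarith
    then show "\<exists>x\<in>A-{0}. norm x < e \<and> norm (x /\<^sub>R norm x - a) < e" using z by blast
  qed (use a in simp)
next
  fix a assume a: "a \<in> dirset A"
  then have a1: "norm a = 1" unfolding dirset_def by blast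
  show "a \<in> dirset (LD A)" unfolding dirset_def
  proof (intro CollectI conjI exI[of _ "\<lambda>i. (1 / (real i + 1)) *\<^sub>R a"])
    show "norm a = 1" by (rule a1)
    show "\<forall>i. (1 / (real i + 1)) *\<^sub>R a \<in> LD A - {0}"
      using a a1 unfolding LD_def by (auto intro!: exI[of _ a])
    have inv: "(\<lambda>n. 1 / (real n + 1)) \<longlonglongrightarrow> 0" using LIMSEQ_inverse_real_of_nat by (simp add: inverse_eq_divide add.commute)
    show "(\<lambda>i. (1 / (real i + 1)) *\<^sub>R a) \<longlonglongrightarrow> 0" using tendsto_scaleR[OF inv tendsto_const[of a]] by simp
    have "(\<lambda>i. (1 / (real i + 1)) *\<^sub>R a /\<^sub>R norm ((1 / (real i + 1)) *\<^sub>R a)) = (\<lambda>i. a)"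
      using a1 by (auto simp: field_simps)
    then show "(\<lambda>i. (1 / (real i + 1)) *\<^sub>R a /\<^sub>R norm ((1 / (real i + 1)) *\<^sub>R a)) \<longlonglongrightarrow> a" by simp
  qed
qed



context blh begin

lemma dir_img: "dirset (h ` (A \<inter> U)) = hbar h ` dirset A"
proof (intro set_eqI iffI)
  fix b assume "b \<in> dirset (h ` (A \<inter> U))"
  then obtain z where z: "norm b = 1" "\<forall>i. z i \<in> h ` (A \<inter> U) - {0}" "z \<longlonglongrightarrow> 0"
    "(\<lambda>i. z i /\<^sub>R norm (z i)) \<longlonglongrightarrow> b" unfolding dirset_def by blast
  have "\<forall>i. \<exists>y. y \<in> A \<inter> U \<and> z i = h y" using z(2) by blast
  from choice[OF this] obtain x where x: "\<forall>i. x i \<in> A \<inter> U \<and> z i = h (x i)" by blast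
  have xnz: "x i \<noteq> 0" for i using x z(2) h0 by (metis DiffE singletonI)
  have xU: "\<forall>i. x i \<in> U - {0}" using x xnz by auto
  have x0: "x \<longlonglongrightarrow> 0"
  proof (rule Lim_null_comparison[of _ "\<lambda>i. norm (z i) / K1"])
    show "\<forall>\<^sub>F i in sequentially. norm (x i) \<le> norm (z i) / K1"
    proof (rule always_eventually, rule allI)
      fix i
      have "K1 * norm (x i) \<le> norm (z i)" using nrm(1)[of "x i"] x by auto
      then show "norm (x i) \<le> norm (z i) / K1" using K by (simp add: field_simps)
    qed
    show "(\<lambda>i. norm (z i) / K1) \<longlonglongrightarrow> 0" using tendsto_divide[OF tendsto_norm_zero[OF z(3)] tendsto_const[of K1]] K by simp
  qed
  have sph: "\<forall>i. x i /\<^sub>R norm (x i) \<in> sphere 0 1" using xnz by simp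
  obtain a r where a: "a \<in> sphere 0 1" "strict_mono r" "((\<lambda>i. x i /\<^sub>R norm (x i)) \<circ> r) \<longlonglongrightarrow> a"
    using seq_compactE[OF compact_imp_seq_compact[OF compact_sphere[of "0::real^'n" 1]] sph] by blast
  have xr0: "(\<lambda>i. x (r i)) \<longlonglongrightarrow> 0" using LIMSEQ_subseq_LIMSEQ[OF x0 a(2)] by (simp add: o_def)
  have xra: "(\<lambda>i. x (r i) /\<^sub>R norm (x (r i))) \<longlonglongrightarrow> a" using a(3) by (simp add: o_def)
  have aA: "a \<in> dirset A" unfolding dirset_def
    using a(1) xr0 xra x xnz by (auto intro!: exI[of _ "\<lambda>i. x (r i)"])
  have "(\<lambda>i. h (x (r i)) /\<^sub>R norm (h (x (r i)))) \<longlonglongrightarrow> hbar h a"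
    by (rule seq_dir(1)) (use xU xr0 xra in auto)
  moreover have "(\<lambda>i. h (x (r i)) /\<^sub>R norm (h (x (r i)))) \<longlonglongrightarrow> b"
  proof -
    have "(\<lambda>i. z (r i) /\<^sub>R norm (z (r i))) \<longlonglongrightarrow> b"
      using LIMSEQ_subseq_LIMSEQ[OF z(4) a(2)] by (simp add: o_def)
    then show ?thesis using x by simp
  qed
  ultimately have "b = hbar h a" using LIMSEQ_unique by blast
  then show "b \<in> hbar h ` dirset A" using aA by blast
next
  fix b assume "b \<in> hbar h ` dirset A"
  then obtain a where b: "b = hbar h a" and "a \<in> dirset A" by blast
  then obtain x where x: "norm a = 1" "\<forall>i. x i \<in> A - {0}" "x \<longlonglongrightarrow> 0"
    "(\<lambda>i. x i /\<^sub>R norm (x i)) \<longlonglongrightarrow> a" unfolding dirset_def by blast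
  have "\<forall>\<^sub>F i in sequentially. x i \<in> U" using topological_tendstoD[OF x(3) opU U0] .
  then obtain N where N: "\<And>i. i \<ge> N \<Longrightarrow> x i \<in> U" unfolding eventually_sequentially by blast
  define y where "y i = x (i + N)" for i
  have yU: "\<forall>i. y i \<in> U - {0}" "\<forall>i. y i \<in> A" using x(2) N unfolding y_def by auto
  have y0: "y \<longlonglongrightarrow> 0" unfolding y_def using LIMSEQ_ignore_initial_segment[OF x(3)] .
  have ya: "(\<lambda>i. y i /\<^sub>R norm (y i)) \<longlonglongrightarrow> a" unfolding y_def
    using LIMSEQ_ignore_initial_segment[OF x(4), of N] .
  have lim: "(\<lambda>i. h (y i) /\<^sub>R norm (h (y i))) \<longlonglongrightarrow> hbar h a" by (rule seq_dir(1)[OF yU(1) y0 ya])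
  show "b \<in> dirset (h ` (A \<inter> U))" unfolding dirset_def b
  proof (intro CollectI conjI exI[of _ "\<lambda>i. h (y i)"])
    show "norm (hbar h a) = 1" by (rule ray_tendsto(2)[OF x(1)])
    show "\<forall>i. h (y i) \<in> h ` (A \<inter> U) - {0}" using yU nz by auto
    show "(\<lambda>i. h (y i)) \<longlonglongrightarrow> 0"
    proof (rule Lim_null_comparison[of _ "\<lambda>i. K2 * norm (y i)"])
      show "\<forall>\<^sub>F i in sequentially. norm (h (y i)) \<le> K2 * norm (y i)"
        using nrm(2) yU by (auto intro!: always_eventually)
      show "(\<lambda>i. K2 * norm (y i)) \<longlonglongrightarrow> 0" by (rule tendsto_mult_right_zero[OF tendsto_norm_zero[OF y0]])
    qed
    show "(\<lambda>i. h (y i) /\<^sub>R norm (h (y i))) \<longlonglongrightarrow> hbar h a" by (rule lim)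
  qed
qed

end


context blh begin

lemma hbar_upper:
  assumes a: "norm a = 1" and b: "norm b = 1"
  shows "norm (hbar h a - hbar h b) \<le> 2 * K2 / K1 * norm (a - b)"
proof (rule tendsto_upperbound)
  show "((\<lambda>t. norm (fa a t - fa b t)) \<longlongrightarrow> norm (hbar h a - hbar h b)) (at_right 0)"
    by (intro tendsto_norm tendsto_diff ray_tendsto(1) a b)
  obtain \<delta> where d: "\<delta> > 0" "ball 0 \<delta> \<subseteq> U" using ballU by blast
  show "\<forall>\<^sub>F t in at_right 0. norm (fa a t - fa b t) \<le> 2 * K2 / K1 * norm (a - b)"
    unfolding eventually_at_right_field
  proof (intro exI[of _ \<delta>] conjI allI impI)
    show "0 < \<delta>" by (rule d(1))
    fix t :: real assume t: "0 < t" "t < \<delta>"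
    have aU: "t *\<^sub>R a \<in> U" and bU: "t *\<^sub>R b \<in> U" using t d a b by (auto simp: subset_iff)
    have vnz: "h (t *\<^sub>R b) \<noteq> 0" using nz[OF bU] t b by (metis norm_zero scaleR_eq_0_iff less_irrefl zero_neq_one)
    have "norm (fa a t - fa b t) \<le> 2 * norm (h (t *\<^sub>R a) - h (t *\<^sub>R b)) / norm (h (t *\<^sub>R b))"
      unfolding fa_def by (rule norm_normalize_diff[OF vnz])
    also have "\<dots> \<le> 2 * K2 / K1 * norm (a - b)"
    proof (rule arith1)
      show "norm (h (t *\<^sub>R a) - h (t *\<^sub>R b)) \<le> K2 * norm (t *\<^sub>R a - t *\<^sub>R b)" by (rule lip(2)[OF aU bU])
      show "K1 * t \<le> norm (h (t *\<^sub>R b))" using nrm(1)[OF bU] b t by simp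
      show "norm (t *\<^sub>R a - t *\<^sub>R b) = t * norm (a - b)" using t
        by (metis abs_of_pos norm_scaleR scaleR_right_diff_distrib)
    qed (use K t in auto)
    finally show "norm (fa a t - fa b t) \<le> 2 * K2 / K1 * norm (a - b)" .
  qed
qed simp

lemma hbar_lower:
  assumes a: "norm a = 1" and b: "norm b = 1"
  shows "K1 / (2 * K2) * norm (a - b) \<le> norm (hbar h a - hbar h b)"
proof (rule ccontr)
  define c where "c = K1 / (2 * K2)"
  have cpos: "c > 0" using K unfolding c_def by simp
  assume "\<not> K1 / (2 * K2) * norm (a - b) \<le> norm (hbar h a - hbar h b)"
  then have lt: "norm (hbar h a - hbar h b) < c * norm (a - b)" unfolding c_def by simp
  define \<eta> where "\<eta> = c * norm (a - b) - norm (hbar h a - hbar h b)"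
  have eta: "\<eta> > 0" using lt unfolding \<eta>_def by simp
  obtain \<delta> where d: "\<delta> > 0" "ball 0 \<delta> \<subseteq> U" using ballU by blast
  have "\<forall>\<^sub>F s in at_right 0. dist (fa a s) (hbar h a) < \<eta> / 2"
    using ray_tendsto(1)[OF a] half_gt_zero[OF eta] unfolding tendsto_iff by blast
  then obtain da where da: "da > 0" "\<And>s. 0 < s \<Longrightarrow> s < da \<Longrightarrow> norm (fa a s - hbar h a) < \<eta> / 2"
    unfolding eventually_at_right_field dist_norm by auto
  have "\<forall>\<^sub>F s in at_right 0. dist (fa b s) (hbar h b) < \<eta> / 2"
    using ray_tendsto(1)[OF b] half_gt_zero[OF eta] unfolding tendsto_iff by blast
  then obtain db where db: "db > 0" "\<And>s. 0 < s \<Longrightarrow> s < db \<Longrightarrow> norm (fa b s - hbar h b) < \<eta> / 2"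
    unfolding eventually_at_right_field dist_norm by auto
  define m where "m = min \<delta> (min da db)"
  have mpos: "m > 0" using d da db unfolding m_def by simp
  have mle: "m \<le> \<delta>" "m \<le> da" "m \<le> db" unfolding m_def by auto
  define t where "t = m * K1 / (2 * K2)"
  have tpos: "t > 0" using mpos K unfolding t_def by simp
  have Kt: "K2 * t / K1 = m / 2" using K unfolding t_def by (simp add: field_simps)
  have tle: "t \<le> m / 2"
  proof -
    have "K1 / (2 * K2) \<le> 1 / 2" using K by (simp add: field_simps)
    then have "m * (K1 / (2 * K2)) \<le> m * (1/2)" using mpos by (intro mult_left_mono) auto
    then show ?thesis unfolding t_def by simp
  qed
  have tm: "t < m" using tle mpos by simp
  have bU: "t *\<^sub>R b \<in> U" using tm tpos d b mle by (auto simp: subset_iff)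
  define r where "r = norm (h (t *\<^sub>R b))"
  have rpos: "r > 0" unfolding r_def using nz[OF bU] tpos b
    by (metis norm_zero scaleR_eq_0_iff less_irrefl zero_neq_one zero_less_norm_iff)
  have rle: "r \<le> K2 * t" using nrm(2)[OF bU] b tpos unfolding r_def by simp
  have rK: "r / K1 \<le> m / 2"
  proof -
    have "r / K1 \<le> K2 * t / K1" using rle K by (intro divide_right_mono) auto
    then show ?thesis using Kt by simp
  qed
  have segU: "s *\<^sub>R a \<in> U" if "0 \<le> s" "s \<le> r / K1" for s
  proof -
    have "s < \<delta>" using that rK mpos mle by linarith
    then show ?thesis using that d a by (auto simp: subset_iff)
  qed
  have cont: "continuous_on {0 .. r / K1} (\<lambda>s. norm (h (s *\<^sub>R a)))"
  proof -
    have "continuous_on {0 .. r / K1} (\<lambda>s. s *\<^sub>R a)" by (intro continuous_intros)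
    moreover have "(\<lambda>s. s *\<^sub>R a) ` {0 .. r / K1} \<subseteq> U" using segU by auto
    ultimately have "continuous_on {0 .. r / K1} (h \<circ> (\<lambda>s. s *\<^sub>R a))"
      using continuous_on_compose continuous_on_subset[OF contU] by blast
    then show ?thesis by (intro continuous_on_norm) (simp add: o_def)
  qed
  have up: "r \<le> norm (h ((r / K1) *\<^sub>R a))"
  proof -
    have "K1 * norm ((r / K1) *\<^sub>R a) \<le> norm (h ((r / K1) *\<^sub>R a))"
      using nrm(1)[OF segU[of "r / K1"]] rpos K by simp
    moreover have "K1 * norm ((r / K1) *\<^sub>R a) = r" using a K rpos by simp
    ultimately show ?thesis by simp
  qed
  obtain s where s: "0 \<le> s" "s \<le> r / K1" "norm (h (s *\<^sub>R a)) = r"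
    using IVT'[of "\<lambda>s. norm (h (s *\<^sub>R a))" 0 r "r / K1", OF _ up _ cont] h0 rpos K by auto
  have spos: "s > 0" using s h0 rpos by (cases "s = 0") auto
  have sda: "s < da" using s rK mpos mle by linarith
  have tdb: "t < db" using tm mle by linarith
  have aU: "s *\<^sub>R a \<in> U" using segU s by simp
  have ha: "h (s *\<^sub>R a) = r *\<^sub>R fa a s" using s(3) rpos unfolding fa_def by simp
  have hb: "h (t *\<^sub>R b) = r *\<^sub>R fa b t" using rpos unfolding fa_def r_def by simp
  have X: "norm (fa a s - fa b t) < c * norm (a - b)"
  proof -
    have "norm (fa a s - fa b t) \<le> norm (fa a s - hbar h a) + norm (hbar h a - hbar h b) + norm (hbar h b - fa b t)"
      using norm_triangle_ineq[of "fa a s - hbar h a" "hbar h a - hbar h b"]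
        norm_triangle_ineq[of "fa a s - hbar h b" "hbar h b - fa b t"] by simp
    moreover have "norm (hbar h b - fa b t) < \<eta> / 2" using db(2)[OF tpos tdb] by (simp add: norm_minus_commute)
    moreover have "norm (fa a s - hbar h a) < \<eta> / 2" using da(2)[OF spos sda] .
    ultimately show ?thesis unfolding \<eta>_def by simp
  qed
  have "K1 * norm (s *\<^sub>R a - t *\<^sub>R b) \<le> norm (h (s *\<^sub>R a) - h (t *\<^sub>R b))" by (rule lip(1)[OF aU bU])
  also have "\<dots> = r * norm (fa a s - fa b t)" unfolding ha hb
    by (metis abs_of_pos norm_scaleR rpos scaleR_right_diff_distrib)
  also have "\<dots> < r * (c * norm (a - b))" using X rpos by simp
  also have "\<dots> \<le> K2 * t * (c * norm (a - b))" using rle cpos by (intro mult_right_mono) auto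
  also have "\<dots> = K1 * (t * norm (a - b)) / 2" using K unfolding c_def by (simp add: field_simps)
  also have "\<dots> \<le> K1 * (2 * norm (s *\<^sub>R a - t *\<^sub>R b)) / 2"
    using geo_ray[OF a b s(1) less_imp_le[OF tpos]] K by (intro divide_right_mono mult_left_mono) auto
  finally show False by simp
qed

end


lemma ext_bounds:
  fixes \<phi> :: "'a::real_normed_vector \<Rightarrow> 'a"
  assumes unit: "\<And>a. norm a = 1 \<Longrightarrow> norm (\<phi> a) = 1"
    and up: "\<And>a b. norm a = 1 \<Longrightarrow> norm b = 1 \<Longrightarrow> norm (\<phi> a - \<phi> b) \<le> L * norm (a - b)"
    and lo: "\<And>a b. norm a = 1 \<Longrightarrow> norm b = 1 \<Longrightarrow> c * norm (a - b) \<le> norm (\<phi> a - \<phi> b)"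
    and L: "L \<ge> 0" and c: "c > 0"
  defines "H \<equiv> \<lambda>x. norm x *\<^sub>R \<phi> (x /\<^sub>R norm x)"
  shows "norm (H x - H y) \<le> (1 + 2 * L) * norm (x - y)"
    and "norm (x - y) \<le> (1 + 2 / c) * norm (H x - H y)"
proof -
  have nH: "norm (H z) = norm z" for z
    using unit[of "z /\<^sub>R norm z"] by (cases "z = 0") (auto simp: H_def)
  have H0: "H 0 = 0" by (simp add: H_def)
  have c2: "1 \<le> 1 + 2 / c" using c by simp
  have L2: "1 \<le> 1 + 2 * L" using L by simp
  have "norm (H x - H y) \<le> (1 + 2 * L) * norm (x - y) \<and> norm (x - y) \<le> (1 + 2 / c) * norm (H x - H y)"
  proof (cases "x = 0 \<or> y = 0")
    case True
    then have e: "norm (H x - H y) = norm (x - y)"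
      using nH H0 by (auto simp: norm_minus_commute)
    show ?thesis unfolding e using c2 L2 by (simp add: mult_le_cancel_right1)
  next
    case False
    define r s a b where "r = norm x" "s = norm y" "a = x /\<^sub>R norm x" "b = y /\<^sub>R norm y"
    have ab: "norm a = 1" "norm b = 1" using False unfolding r_s_a_b_def by auto
    have rs: "r \<ge> 0" "s \<ge> 0" unfolding r_s_a_b_def by auto
    have xy: "x = r *\<^sub>R a" "y = s *\<^sub>R b" using False unfolding r_s_a_b_def by auto
    have Hxy: "H x = r *\<^sub>R \<phi> a" "H y = s *\<^sub>R \<phi> b" unfolding H_def r_s_a_b_def by auto
    have AB: "norm (\<phi> a) = 1" "norm (\<phi> b) = 1" using unit ab by auto
    have m0: "min r s \<ge> 0" using rs by simp
    have u1: "norm (H x - H y) \<le> \<bar>r - s\<bar> + min r s * norm (\<phi> a - \<phi> b)"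
      unfolding Hxy by (rule geo2[OF AB rs])
    have u2: "min r s * norm (\<phi> a - \<phi> b) \<le> min r s * (L * norm (a - b))"
      by (rule mult_left_mono[OF up[OF ab] m0])
    have u3: "\<bar>r - s\<bar> \<le> norm (x - y)" unfolding xy by (rule geo1[OF ab rs])
    have u4: "min r s * norm (a - b) \<le> 2 * norm (x - y)" unfolding xy by (rule geo3[OF ab rs])
    have u5: "L * (min r s * norm (a - b)) \<le> L * (2 * norm (x - y))" using u4 L by (rule mult_left_mono)
    have U: "norm (H x - H y) \<le> (1 + 2 * L) * norm (x - y)"
      using u1 u2 u3 u5 by (simp add: algebra_simps)
    have l1: "norm (x - y) \<le> \<bar>r - s\<bar> + min r s * norm (a - b)" unfolding xy by (rule geo2[OF ab rs])
    have l2: "\<bar>r - s\<bar> \<le> norm (H x - H y)" unfolding Hxy by (rule geo1[OF AB rs])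
    have l3: "min r s * norm (\<phi> a - \<phi> b) \<le> 2 * norm (H x - H y)" unfolding Hxy by (rule geo3[OF AB rs])
    have l4: "min r s * (c * norm (a - b)) \<le> min r s * norm (\<phi> a - \<phi> b)"
      by (rule mult_left_mono[OF lo[OF ab] m0])
    have l5: "min r s * norm (a - b) \<le> 2 / c * norm (H x - H y)"
    proof -
      have "c * (min r s * norm (a - b)) \<le> 2 * norm (H x - H y)" using l3 l4 by (simp add: algebra_simps)
      then show ?thesis using c by (simp add: field_simps)
    qed
    have "norm (x - y) \<le> (1 + 2 / c) * norm (H x - H y)"
      using l1 l2 l5 by (simp add: algebra_simps)
    then show ?thesis using U by simp
  qed
  then show "norm (H x - H y) \<le> (1 + 2 * L) * norm (x - y)"
    and "norm (x - y) \<le> (1 + 2 / c) * norm (H x - H y)" by auto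
qed



lemma lipschitz_cont:
  fixes f :: "'a::metric_space \<Rightarrow> 'b::metric_space"
  assumes "L > 0" "\<And>x y. dist (f x) (f y) \<le> L * dist x y"
  shows "continuous_on UNIV f"
  unfolding continuous_on_iff
proof (intro ballI allI impI)
  fix x and e :: real assume e: "0 < e"
  show "\<exists>d>0. \<forall>x'\<in>UNIV. dist x' x < d \<longrightarrow> dist (f x') (f x) < e"
  proof (intro exI[of _ "e / L"] conjI ballI impI)
    show "0 < e / L" using e assms by simp
    fix y assume y: "dist y x < e / L"
    have "dist (f y) (f x) \<le> L * dist y x" by (rule assms(2))
    also have "\<dots> < L * (e / L)" using y assms by (intro mult_strict_left_mono) auto
    also have "\<dots> = e" using assms by simp
    finally show "dist (f y) (f x) < e" .
  qed
qed

context blh begin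

lemma part1: "\<exists>H G L1 L2. homeomorphism UNIV UNIV H G \<and> bilipschitz_on UNIV L1 L2 H \<and>
            (\<forall>a. norm a = 1 \<longrightarrow> H a = hbar h a)"
proof -
  define L where "L = 2 * K2 / K1"
  define c where "c = K1 / (2 * K2)"
  define Hm where "Hm = (\<lambda>x::real^'n. norm x *\<^sub>R hbar h (x /\<^sub>R norm x))"
  define L2 where "L2 = 1 + 2 * L"
  define M where "M = 1 + 2 / c"
  have Lpos: "L > 0" and cpos: "c > 0" using K unfolding L_def c_def by auto
  have L2pos: "L2 \<ge> 1" using Lpos unfolding L2_def by simp
  have Mpos: "M \<ge> 1" using cpos unfolding M_def by simp
  have ub: "norm (Hm x - Hm y) \<le> L2 * norm (x - y)" for x y
    unfolding Hm_def L2_def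
    by (rule ext_bounds(1)[where c = c]) (use ray_tendsto(2) hbar_upper hbar_lower Lpos cpos in \<open>auto simp: L_def c_def\<close>)
  have lb: "norm (x - y) \<le> M * norm (Hm x - Hm y)" for x y
    unfolding Hm_def M_def
    by (rule ext_bounds(2)[where L = L]) (use ray_tendsto(2) hbar_upper hbar_lower Lpos cpos in \<open>auto simp: L_def c_def\<close>)
  have unitH: "Hm a = hbar h a" if "norm a = 1" for a using that unfolding Hm_def by simp
  have bil: "bilipschitz_on UNIV (1 / M) L2 Hm"
    unfolding bilipschitz_on_def
  proof (intro conjI ballI)
    show "0 < 1 / M" using Mpos by simp
    show "1 / M \<le> L2" using Mpos L2pos by (smt (verit) divide_le_eq_1)
    fix x y :: "real^'n"
    show "1 / M * norm (x - y) \<le> norm (Hm x - Hm y)" using lb[of x y] Mpos by (simp add: field_simps)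
    show "norm (Hm x - Hm y) \<le> L2 * norm (x - y)" by (rule ub)
  qed
  have cont: "continuous_on UNIV Hm"
    by (rule lipschitz_cont[of L2]) (use L2pos ub in \<open>auto simp: dist_norm\<close>)
  have inj: "inj_on Hm UNIV"
  proof (rule inj_onI)
    fix x y assume "Hm x = Hm y"
    then have "norm (x - y) \<le> 0" using lb[of x y] by simp
    then show "x = y" by simp
  qed
  have op: "open (range Hm)" by (rule invariance_of_domain[OF cont open_UNIV inj])
  have cl: "closed (range Hm)"
    unfolding closed_sequential_limits
  proof (intro allI impI)
    fix y l assume yl: "(\<forall>n. y n \<in> range Hm) \<and> y \<longlonglongrightarrow> l"
    then have "\<forall>n. \<exists>x. y n = Hm x" by blast
    from choice[OF this] obtain x where x: "\<forall>n. y n = Hm (x n)" by blast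
    have "Cauchy y" using yl by (auto intro: LIMSEQ_imp_Cauchy)
    have "Cauchy x"
    proof (rule CauchyI)
      fix e :: real assume e: "0 < e"
      then have "e / M > 0" using Mpos by simp
      from CauchyD[OF \<open>Cauchy y\<close> this] obtain N where N: "\<forall>m\<ge>N. \<forall>n\<ge>N. norm (y m - y n) < e / M" by blast
      show "\<exists>N. \<forall>m\<ge>N. \<forall>n\<ge>N. norm (x m - x n) < e"
      proof (intro exI[of _ N] allI impI)
        fix m n assume mn: "m \<ge> N" "n \<ge> N"
        have "norm (x m - x n) \<le> M * norm (y m - y n)" using lb[of "x m" "x n"] x by simp
        also have "\<dots> < M * (e / M)" using N mn Mpos by (intro mult_strict_left_mono) auto
        also have "\<dots> = e" using Mpos by simp
        finally show "norm (x m - x n) < e" .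
      qed
    qed
    then obtain p where p: "x \<longlonglongrightarrow> p" using Cauchy_convergent_iff convergent_def by blast
    have "(\<lambda>n. Hm (x n)) \<longlonglongrightarrow> Hm p" by (rule continuous_on_tendsto_compose[OF cont p]) (simp_all add: always_eventually)
    moreover have "y = (\<lambda>n. Hm (x n))" using x by auto
    ultimately have "y \<longlonglongrightarrow> Hm p" by simp
    then have "l = Hm p" using yl LIMSEQ_unique by blast
    then show "l \<in> range Hm" by simp
  qed
  have "range Hm = UNIV" using clopen[of "range Hm"] op cl by auto
  obtain g where g: "homeomorphism UNIV (Hm ` UNIV) Hm g"
    using invariance_of_domain_homeomorphism[OF open_UNIV cont _ inj] by auto
  then have "homeomorphism UNIV UNIV Hm g" using \<open>range Hm = UNIV\<close> by simp
  then show ?thesis using bil unitH by blast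
qed

end

theorem theorem2p25:
  fixes h :: "real ^ 'n \<Rightarrow> real ^ 'n" and U :: "(real ^ 'n) set" and K1 K2 :: real
  assumes "open U" and "0 \<in> U" and "h 0 = 0"
    and "bilipschitz_on U K1 K2 h"
    and "semiline_SSP U h"
  shows "(\<exists>H G L1 L2. homeomorphism UNIV UNIV H G \<and> bilipschitz_on UNIV L1 L2 H \<and>
            (\<forall>a. norm a = 1 \<longrightarrow> H a = hbar h a))
       \<and> (\<forall>A :: (real ^ 'n) set. 0 \<in> closure A \<longrightarrow>
            hbar h ` dirset A = dirset (h ` (LD A \<inter> U)) \<and>
            dirset (h ` (LD A \<inter> U)) = dirset (h ` (A \<inter> U)))"
proof -
  interpret blh h U K1 K2 using assms by unfold_locales
  have "\<forall>A :: (real ^ 'n) set. 0 \<in> closure A \<longrightarrow>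
            hbar h ` dirset A = dirset (h ` (LD A \<inter> U)) \<and>
            dirset (h ` (LD A \<inter> U)) = dirset (h ` (A \<inter> U))" by (simp add: dir_img dirset_LD)
  with part1 show ?thesis by blast
qed


end
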